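(* Under the assumptions below, $p_\epsilon(v^\epsilon-g^\epsilon)$ is bounded on $E_T$ uniformly in $\epsilon\in(0,1)$, where $v^\epsilon$ is the bounded classical solution in $H^{2+\frac{\beta-\alpha}{2},1+\frac{\beta-\alpha}{4}}(E_T)$ ($\beta\in(\alpha,2)$) of $$(\partial_t-\mathcal{L}_D-I+r)v^\epsilon+p_\epsilon(v^\epsilon-g^\epsilon)=0\ \text{ on }\mathbb{R}\times(0,T],\qquad v^\epsilon(x,0)=g^\epsilon(x).$$ Assumptions: $T>0$, $E_T=\mathbb{R}\times[0,T]$; $a,b,r\in H^{\ell,\ell/2}(E_T)$ for some $\ell>1$, $r\ge0$, $a\ge\lambda>0$ on $E_T$; $\nu$ is a Lévy measure with $\int_{|y|>1}|y|\,\nu(dy)<\infty$ and a density $\rho$ with $\rho(y)\le M/|y|^{1+\alpha}$ for $|y|\le1$, $M>0$, $1\le\alpha<2$; $g$ satisfies $0\le g\le K$, is $L$-Lipschitz, and $\partial^2_{xx}g\ge-J_0$ distributionally.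
   Context: $\mathcal{L}_Dv=a\,\partial^2_{xx}v+b\,\partial_xv$, $Iv(x,t)=\int_{\mathbb{R}}[v(x+y,t)-v(x,t)-y\,\partial_xv(x,t)\mathbf{1}_{\{|y|\le1\}}]\nu(dy)$. $(g^\epsilon)$ are smooth mollifications of $g$ with $\partial^2_{xx}g^\epsilon\ge-J_0$, $0\le g^\epsilon\le K$, $|(g^\epsilon)'|\le L$. Each $p_\epsilon\in C^\infty(\mathbb{R})$ satisfies: $p_\epsilon\le0$; $p_\epsilon(y)=0$ for $y\ge\epsilon$; $p_\epsilon(0)=-a^{(0)}J_0-|b|^{(0)}L-r^{(0)}K-J_0\int_{|y|\le1}|y|^2\nu(dy)-K\int_{|y|>1}\nu(dy)$ with $a^{(0)}=\max_{E_T}a$, $|b|^{(0)}=\max_{E_T}|b|$, $r^{(0)}=\max_{E_T}r$; $p_\epsilon'\ge0$; $p_\epsilon''\le0$; $p_\epsilon(y)\to0$ for $y>0$ and $\to-\infty$ for $y<0$ as $\epsilon\downarrow0$. $H^{\gamma,\gamma/2}(E_T)$ denotes the parabolic Hölder space of order $\gamma$ (non-integer) on $E_T$. *)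

theory Defs
  imports "HOL-Analysis.Analysis"
begin

definition ET :: "real \<Rightarrow> (real \<times> real) set" where
  "ET T = UNIV \<times> {0..T}"

definition pdx :: "(real \<Rightarrow> real \<Rightarrow> real) \<Rightarrow> real \<Rightarrow> real \<Rightarrow> real" where
  "pdx u = (\<lambda>x t. deriv (\<lambda>z. u z t) x)"

definition pdt :: "real \<Rightarrow> (real \<Rightarrow> real \<Rightarrow> real) \<Rightarrow> real \<Rightarrow> real \<Rightarrow> real" where
  "pdt T u = (\<lambda>x t. vector_derivative (\<lambda>s. u x s) (at t within {0..T}))"

definition Dtx :: "real \<Rightarrow> nat \<Rightarrow> nat \<Rightarrow> (real \<Rightarrow> real \<Rightarrow> real) \<Rightarrow> real \<Rightarrow> real \<Rightarrow> real" where
  "Dtx T r s u = (pdt T ^^ r) ((pdx ^^ s) u)"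

definition holder_x :: "real \<Rightarrow> real \<Rightarrow> (real \<Rightarrow> real \<Rightarrow> real) \<Rightarrow> bool" where
  "holder_x T \<theta> f \<longleftrightarrow>
     (\<exists>C. \<forall>x y t. t \<in> {0..T} \<longrightarrow> \<bar>f x t - f y t\<bar> \<le> C * \<bar>x - y\<bar> powr \<theta>)"

definition holder_t :: "real \<Rightarrow> real \<Rightarrow> (real \<Rightarrow> real \<Rightarrow> real) \<Rightarrow> bool" where
  "holder_t T \<theta> f \<longleftrightarrow>
     (\<exists>C. \<forall>x t s. t \<in> {0..T} \<longrightarrow> s \<in> {0..T} \<longrightarrow> \<bar>f x t - f x s\<bar> \<le> C * \<bar>t - s\<bar> powr \<theta>)"

text \<open>Parabolic Hoelder space H^{gamma,gamma/2}(E_T), gamma > 0 non-integer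
  (Ladyzhenskaya--Solonnikov--Ural'tseva): all D_t^r D_x^s u with 2r+s <= [gamma]
  exist, are continuous and bounded on E_T; those with 2r+s = [gamma] are
  (gamma-[gamma])-Hoelder in x; and D_t^r D_x^s u is ((gamma-2r-s)/2)-Hoelder in t
  whenever 0 < gamma-2r-s < 2.\<close>
definition parabolic_holder :: "real \<Rightarrow> real \<Rightarrow> (real \<Rightarrow> real \<Rightarrow> real) \<Rightarrow> bool" where
  "parabolic_holder \<gamma> T u \<longleftrightarrow> 0 < \<gamma> \<and> \<gamma> \<notin> \<int> \<and>
    (\<forall>r s. 2 * r + s \<le> nat \<lfloor>\<gamma>\<rfloor> \<longrightarrow>
        continuous_on (ET T) (\<lambda>(x, t). Dtx T r s u x t)
      \<and> bounded ((\<lambda>(x, t). Dtx T r s u x t) ` ET T)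
      \<and> (2 * (r + 1) + s \<le> nat \<lfloor>\<gamma>\<rfloor> \<longrightarrow>
           (\<forall>x t. t \<in> {0..T} \<longrightarrow> (\<lambda>\<tau>. Dtx T r s u x \<tau>) differentiable (at t within {0..T})))
      \<and> (r = 0 \<and> s + 1 \<le> nat \<lfloor>\<gamma>\<rfloor> \<longrightarrow>
           (\<forall>x t. t \<in> {0..T} \<longrightarrow> (\<lambda>z. Dtx T 0 s u z t) differentiable (at x)))
      \<and> (2 * r + s = nat \<lfloor>\<gamma>\<rfloor> \<longrightarrow> holder_x T (\<gamma> - of_int \<lfloor>\<gamma>\<rfloor>) (Dtx T r s u)))
    \<and> (\<forall>r s. 0 < \<gamma> - real (2 * r + s) \<and> \<gamma> - real (2 * r + s) < 2 \<longrightarrow>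
        holder_t T ((\<gamma> - real (2 * r + s)) / 2) (Dtx T r s u))"

definition smooth_fun :: "(real \<Rightarrow> real) \<Rightarrow> bool" where
  "smooth_fun f \<longleftrightarrow> (\<forall>n x. ((deriv ^^ n) f) differentiable (at x))"

text \<open>Distributional inequality g'' >= c: tested against nonnegative smooth compactly supported functions.\<close>
definition dist_d2_ge :: "(real \<Rightarrow> real) \<Rightarrow> real \<Rightarrow> bool" where
  "dist_d2_ge g c \<longleftrightarrow>
     (\<forall>\<phi>. smooth_fun \<phi> \<and> (\<forall>x. 0 \<le> \<phi> x) \<and> bounded {x. \<phi> x \<noteq> 0} \<longrightarrow>
        c * (\<integral>x. \<phi> x \<partial>lborel) \<le> (\<integral>x. g x * deriv (deriv \<phi>) x \<partial>lborel))"

definition levy_measure :: "real measure \<Rightarrow> bool" where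
  "levy_measure \<nu> \<longleftrightarrow> sets \<nu> = sets borel \<and> emeasure \<nu> {0} = 0 \<and>
     (\<integral>\<^sup>+ y. ennreal (min 1 (y\<^sup>2)) \<partial>\<nu>) < \<infinity>"

definition levy_I :: "real measure \<Rightarrow> (real \<Rightarrow> real \<Rightarrow> real) \<Rightarrow> real \<Rightarrow> real \<Rightarrow> real" where
  "levy_I \<nu> v x t =
     (\<integral>y. v (x + y) t - v x t - y * pdx v x t * indicator {y. \<bar>y\<bar> \<le> 1} y \<partial>\<nu>)"

definition LD :: "(real \<Rightarrow> real \<Rightarrow> real) \<Rightarrow> (real \<Rightarrow> real \<Rightarrow> real) \<Rightarrow> (real \<Rightarrow> real \<Rightarrow> real) \<Rightarrow> real \<Rightarrow> real \<Rightarrow> real" where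
  "LD a b v x t = a x t * pdx (pdx v) x t + b x t * pdx v x t"

text \<open>sup over E_T (the paper's max_{E_T}).\<close>
definition supET :: "real \<Rightarrow> (real \<Rightarrow> real \<Rightarrow> real) \<Rightarrow> real" where
  "supET T f = (SUP z\<in>ET T. f (fst z) (snd z))"

end

theory Submission
  imports Defs
begin


lemma taylor_lower:
  fixes f f' f'' :: "real \<Rightarrow> real"
  assumes d1: "\<And>z. (f has_real_derivative f' z) (at z)"
    and d2: "\<And>z. (f' has_real_derivative f'' z) (at z)"
    and lb: "\<And>z. - c \<le> f'' z" and c: "0 \<le> c"
  shows "- c * y\<^sup>2 \<le> f (x + y) - f x - y * f' x"
proof (cases "y = 0")
  case True then show ?thesis by simp
next
  case False
  show ?thesis
  proof (cases "y > 0")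
    case True
    obtain \<xi> where \<xi>: "x < \<xi>" "\<xi> < x + y" "f (x + y) - f x = (x + y - x) * f' \<xi>"
      using MVT2[of x "x + y" f f'] True d1 by auto
    obtain \<eta> where \<eta>: "f' \<xi> - f' x = (\<xi> - x) * f'' \<eta>"
      using MVT2[of x \<xi> f' f''] \<xi>(1) d2 by auto
    have "f (x + y) - f x - y * f' x = y * (f' \<xi> - f' x)"
      using \<xi>(3) by (simp add: algebra_simps)
    then have e: "f (x + y) - f x - y * f' x = y * (\<xi> - x) * f'' \<eta>"
      using \<eta> by simp
    have "y * (\<xi> - x) * f'' \<eta> \<ge> y * (\<xi> - x) * (- c)"
      using lb[of \<eta>] True \<xi> by (intro mult_left_mono) auto
    moreover have "y * (\<xi> - x) * c \<le> y * y * c"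
      using True \<xi> c by (intro mult_right_mono mult_left_mono) auto
    ultimately show ?thesis using e by (simp add: power2_eq_square algebra_simps)
  next
    case False
    then have yn: "y < 0" using \<open>y \<noteq> 0\<close> by simp
    obtain \<xi> where \<xi>: "x + y < \<xi>" "\<xi> < x" "f x - f (x + y) = (x - (x + y)) * f' \<xi>"
      using MVT2[of "x + y" x f f'] yn d1 by auto
    obtain \<eta> where \<eta>: "f' x - f' \<xi> = (x - \<xi>) * f'' \<eta>"
      using MVT2[of \<xi> x f' f''] \<xi>(2) d2 by auto
    have "f (x + y) - f x - y * f' x = (- y) * (f' x - f' \<xi>)"
      using \<xi>(3) by (simp add: algebra_simps)
    then have e: "f (x + y) - f x - y * f' x = (- y) * (x - \<xi>) * f'' \<eta>"
      using \<eta> by simp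
    have pos: "0 \<le> (- y) * (x - \<xi>)" using yn \<xi> by (intro mult_nonneg_nonneg) auto
    have "(- y) * (x - \<xi>) * f'' \<eta> \<ge> (- y) * (x - \<xi>) * (- c)"
      using mult_left_mono[OF lb[of \<eta>] pos] by (simp add: mult.commute)
    moreover have "(- y) * (x - \<xi>) * c \<le> (- y) * (- y) * c"
      using yn \<xi> c by (intro mult_right_mono mult_left_mono) auto
    ultimately show ?thesis using e by (simp add: power2_eq_square algebra_simps)
  qed
qed

definition th :: "real \<Rightarrow> real" where "th x = ln (cosh x)"

lemma th_deriv: "(th has_real_derivative tanh x) (at x)"
  unfolding th_def
  by (auto intro!: derivative_eq_intros simp: tanh_def)

lemma tanh_deriv: "(tanh has_real_derivative 1 - tanh x ^ 2) (at x)"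
  using has_field_derivative_tanh[of "\<lambda>x. x" x 1 UNIV] by (simp add: DERIV_ident)

lemma th_nonneg: "0 \<le> th x"
  unfolding th_def using cosh_real_ge_1[of x] by simp

lemma th_coercive: "\<bar>x\<bar> - 1 \<le> th x"
proof -
  have "exp \<bar>x\<bar> / 2 \<le> cosh x"
    by (cases "x \<ge> 0") (auto simp: cosh_field_def)
  then have "ln (exp \<bar>x\<bar> / 2) \<le> th x" unfolding th_def by (subst ln_le_cancel_iff) auto
  moreover have "ln (exp \<bar>x\<bar> / 2) = \<bar>x\<bar> - ln 2" by (simp add: ln_div)
  ultimately show ?thesis using ln_2_less_1 by linarith
qed

lemma th_lip: "\<bar>th a - th b\<bar> \<le> \<bar>a - b\<bar>"
proof -
  have "\<forall>z::real. \<bar>tanh z\<bar> \<le> 1"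
    by (simp add: abs_le_iff) (meson less_imp_le tanh_real_gt_neg1 tanh_real_lt_1)
  show ?thesis
  proof (cases a b rule: linorder_cases)
    case less
    obtain z where "th b - th a = (b - a) * tanh z" using MVT2[of a b th tanh] less th_deriv by auto
    then have "\<bar>th a - th b\<bar> = \<bar>(b - a) * tanh z\<bar>" by (metis abs_minus_commute)
    then have "\<bar>th a - th b\<bar> = \<bar>b - a\<bar> * \<bar>tanh z\<bar>" by (simp only: abs_mult)
    also have "\<dots> \<le> \<bar>b - a\<bar>" using \<open>\<forall>z. \<bar>tanh z\<bar> \<le> 1\<close> by (simp add: mult_left_le)
    finally show ?thesis by (simp add: abs_minus_commute)
  next
    case equal then show ?thesis by simp
  next
    case greater
    obtain z where "th a - th b = (a - b) * tanh z" using MVT2[of b a th tanh] greater th_deriv by auto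
    then have "\<bar>th a - th b\<bar> = \<bar>a - b\<bar> * \<bar>tanh z\<bar>" by (simp add: abs_mult)
    also have "\<dots> \<le> \<bar>a - b\<bar>" using \<open>\<forall>z. \<bar>tanh z\<bar> \<le> 1\<close> by (simp add: mult_left_le)
    finally show ?thesis .
  qed
qed



lemma min_deriv2:
  fixes f f' :: "real \<Rightarrow> real"
  assumes d1: "\<And>z. (f has_real_derivative f' z) (at z)"
    and d2: "(f' has_real_derivative f2) (at x0)"
    and mn: "\<And>z. f x0 \<le> f z"
  shows "f' x0 = 0" and "0 \<le> f2"
proof -
  show z: "f' x0 = 0"
    using DERIV_local_min[OF d1[of x0], of 1] mn by auto
  show "0 \<le> f2"
  proof (rule ccontr)
    assume "\<not> 0 \<le> f2"
    then have "f2 < 0" by simp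
    from DERIV_neg_dec_right[OF d2 this] obtain d where d: "d > 0"
      and lt: "\<forall>h>0. h < d \<longrightarrow> f' x0 > f' (x0 + h)" by blast
    obtain \<xi> where \<xi>: "x0 < \<xi>" "\<xi> < x0 + d / 2" "f (x0 + d / 2) - f x0 = (x0 + d / 2 - x0) * f' \<xi>"
      using MVT2[of x0 "x0 + d / 2" f f'] d d1 by auto
    have "f' \<xi> < 0" using lt[rule_format, of "\<xi> - x0"] \<xi> z by auto
    moreover have "(x0 + d / 2 - x0) * f' \<xi> < 0" using d \<open>f' \<xi> < 0\<close> by (intro mult_pos_neg) auto
    ultimately have "f (x0 + d / 2) - f x0 < 0" using \<xi>(3) by linarith
    then show False using mn[of "x0 + d / 2"] by simp
  qed
qed

lemma min_left_deriv:
  fixes \<phi> :: "real \<Rightarrow> real"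
  assumes d: "(\<phi> has_real_derivative D) (at t0 within {0..T})"
    and t0: "0 < t0" "t0 \<le> T" and mn: "\<And>s. s \<in> {0..T} \<Longrightarrow> \<phi> t0 \<le> \<phi> s"
  shows "D \<le> 0"
proof (rule ccontr)
  assume "\<not> D \<le> 0"
  then have "0 < D" by simp
  from has_real_derivative_pos_inc_left[OF d this] obtain e where e: "e > 0"
    and lt: "\<forall>h>0. t0 - h \<in> {0..T} \<longrightarrow> h < e \<longrightarrow> \<phi> (t0 - h) < \<phi> t0" by blast
  define h where "h = min (e / 2) t0"
  have "h > 0" "h < e" "t0 - h \<in> {0..T}" using e t0 by (auto simp: h_def)
  then have "\<phi> (t0 - h) < \<phi> t0" using lt by blast
  then show False using mn[of "t0 - h"] \<open>t0 - h \<in> {0..T}\<close> by simp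
qed

lemma integral_lower:
  fixes f H :: "real \<Rightarrow> real"
  assumes H: "integrable M H" and fH: "\<And>y. - H y \<le> f y" and H0: "\<And>y. 0 \<le> H y"
  shows "- (\<integral>y. H y \<partial>M) \<le> (\<integral>y. f y \<partial>M)"
proof (cases "integrable M f")
  case True
  have "(\<integral>y. - H y \<partial>M) \<le> (\<integral>y. f y \<partial>M)"
    using H True fH by (intro integral_mono) auto
  then show ?thesis by simp
next
  case False
  then have "(\<integral>y. f y \<partial>M) = 0" by (rule not_integrable_integral_eq)
  moreover have "0 \<le> (\<integral>y. H y \<partial>M)" using H0 by (intro integral_nonneg_AE) auto
  ultimately show ?thesis by simp
qed

lemma J_nonneg:
  fixes g g' g'' :: "real \<Rightarrow> real"
  assumes d1: "\<And>z. (g has_real_derivative g' z) (at z)"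
    and d2: "\<And>z. (g' has_real_derivative g'' z) (at z)"
    and lb: "\<And>z. - J \<le> g'' z" and gb: "\<And>z. 0 \<le> g z \<and> g z \<le> K"
  shows "0 \<le> J"
proof (rule ccontr)
  assume "\<not> 0 \<le> J"
  then have c: "0 < - J" by simp
  define x where "x = (\<bar>g' 0\<bar> + K + 1) / (- J) + 1"
  have "0 \<le> (\<bar>g' 0\<bar> + K + 1) / (- J)" using c gb[of 0] by (intro divide_nonneg_pos) auto
  then have x1: "1 \<le> x" by (simp add: x_def)
  have cx: "- J * x \<ge> \<bar>g' 0\<bar> + K + 1"
  proof -
    have "- J * x = (\<bar>g' 0\<bar> + K + 1) + (- J)" using c by (simp add: x_def field_simps)
    then show ?thesis using c by simp
  qed
  obtain \<xi> where \<xi>: "x < \<xi>" "\<xi> < 2 * x" "g (2 * x) - g x = (2 * x - x) * g' \<xi>"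
    using MVT2[of x "2 * x" g g'] x1 d1 by auto
  obtain \<eta> where \<eta>: "g' \<xi> - g' 0 = (\<xi> - 0) * g'' \<eta>"
    using MVT2[of 0 \<xi> g' g''] \<xi> x1 d2 by auto
  have "\<xi> * g'' \<eta> \<ge> \<xi> * (- J)" using lb[of \<eta>] \<xi> x1 by (intro mult_left_mono) auto
  moreover have "\<xi> * (- J) \<ge> x * (- J)" using \<xi> c by (intro mult_right_mono) auto
  ultimately have "g' \<xi> \<ge> g' 0 + (\<bar>g' 0\<bar> + K + 1)" using \<eta> cx by (simp add: mult.commute)
  then have "g' \<xi> \<ge> K + 1" by simp
  then have "x * g' \<xi> \<ge> 1 * (K + 1)" using x1 gb[of 0]
    by (intro mult_mono) auto
  then have "g (2 * x) - g x \<ge> K + 1" using \<xi>(3) by simp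
  then show False using gb[of "2 * x"] gb[of x] by simp
qed


lemma main_nonneg:
  fixes v a b r :: "real \<Rightarrow> real \<Rightarrow> real" and g g' g'' p :: "real \<Rightarrow> real"
    and \<nu> :: "real measure"
  assumes T: "0 < T"
    and v_cont: "continuous_on (ET T) (\<lambda>(x, t). v x t)"
    and v_bdd: "bounded ((\<lambda>(x, t). v x t) ` ET T)"
    and v_dx: "\<And>x t. t \<in> {0..T} \<Longrightarrow> (\<lambda>z. v z t) differentiable (at x)"
    and v_dxx: "\<And>x t. t \<in> {0..T} \<Longrightarrow> (\<lambda>z. pdx v z t) differentiable (at x)"
    and v_dt: "\<And>x t. t \<in> {0..T} \<Longrightarrow> (\<lambda>s. v x s) differentiable (at t within {0..T})"
    and g1: "\<And>z. (g has_real_derivative g' z) (at z)"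
    and g2: "\<And>z. (g' has_real_derivative g'' z) (at z)"
    and g2lb: "\<And>z. - Jc \<le> g'' z" and Jc: "0 \<le> Jc"
    and gb: "\<And>z. 0 \<le> g z \<and> g z \<le> K"
    and gl: "\<And>z. \<bar>g' z\<bar> \<le> L"
    and ab: "\<And>x t. t \<in> {0..T} \<Longrightarrow> 0 \<le> a x t \<and> a x t \<le> Ac"
    and bb: "\<And>x t. t \<in> {0..T} \<Longrightarrow> \<bar>b x t\<bar> \<le> Bc"
    and rb: "\<And>x t. t \<in> {0..T} \<Longrightarrow> 0 \<le> r x t \<and> r x t \<le> Rc"
    and int2: "integrable \<nu> (\<lambda>y. indicator {y. \<bar>y\<bar> \<le> 1} y * y\<^sup>2)"
    and int1: "integrable \<nu> (\<lambda>y. \<bar>y\<bar> * indicator {y. 1 < \<bar>y\<bar>} y)"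
    and intm: "integrable \<nu> (\<lambda>y. indicator {y::real. 1 < \<bar>y\<bar>} y :: real)"
    and intm_eq: "(\<integral>y. indicator {y::real. 1 < \<bar>y\<bar>} y \<partial>\<nu>) = measure \<nu> {y. 1 < \<bar>y\<bar>}"
    and p_mono: "\<And>y. y \<le> 0 \<Longrightarrow> p y \<le> p 0"
    and p0: "p 0 = - Ac * Jc - Bc * L - Rc * K
        - Jc * (\<integral>y. indicator {y. \<bar>y\<bar> \<le> 1} y * y\<^sup>2 \<partial>\<nu>)
        - K * measure \<nu> {y. 1 < \<bar>y\<bar>}"
    and eq: "\<And>x t. t \<in> {0<..T} \<Longrightarrow>
        pdt T v x t - LD a b v x t - levy_I \<nu> v x t + r x t * v x t + p (v x t - g x) = 0"
    and init: "\<And>x. v x 0 = g x"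
    and tT: "t \<in> {0..T}"
  shows "g x \<le> v x t"
proof (rule ccontr)
  assume "\<not> g x \<le> v x t"
  then have neg: "v x t < g x" by simp
  define x1 t1 where "x1 = x" and "t1 = t"
  have t1: "t1 \<in> {0..T}" and neg1: "v x1 t1 < g x1" using tT neg by (auto simp: x1_def t1_def)
  define I2 where "I2 = (\<integral>y. indicator {y::real. \<bar>y\<bar> \<le> 1} y * y\<^sup>2 \<partial>\<nu>)"
  define I1 where "I1 = (\<integral>y. \<bar>y\<bar> * indicator {y::real. 1 < \<bar>y\<bar>} y \<partial>\<nu>)"
  define m where "m = measure \<nu> {y::real. 1 < \<bar>y\<bar>}"
  have I2: "0 \<le> I2" unfolding I2_def by (intro integral_nonneg_AE) auto
  have I1: "0 \<le> I1" unfolding I1_def by (intro integral_nonneg_AE) auto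
  have Ac: "0 \<le> Ac" using ab[of 0 0] T by auto
  have Bc: "0 \<le> Bc" using bb[of 0 0] T by auto
  define \<Lambda> where "\<Lambda> = Ac + Bc + I2 + I1 + 1"
  have \<Lambda>: "0 \<le> \<Lambda>" using Ac Bc I1 I2 by (simp add: \<Lambda>_def)
  obtain Bv where Bv: "\<And>x t. t \<in> {0..T} \<Longrightarrow> \<bar>v x t\<bar> \<le> Bv"
  proof -
    from v_bdd obtain c where c: "\<forall>z\<in>(\<lambda>(x, t). v x t) ` ET T. norm z \<le> c"
      unfolding bounded_iff by blast
    show ?thesis
    proof (rule that[of c])
      fix x t :: real assume "t \<in> {0..T}"
      then have "(x, t) \<in> ET T" by (simp add: ET_def)
      then show "\<bar>v x t\<bar> \<le> c" using c by force
    qed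
  qed
  define \<eta> where "\<eta> = g x1 - v x1 t1"
  have \<eta>: "0 < \<eta>" using neg1 by (simp add: \<eta>_def)
  define D where "D = 2 * (th x1 + \<Lambda> * T + 1)"
  have D: "0 < D" using th_nonneg[of x1] mult_nonneg_nonneg[OF \<Lambda>, of T] T by (simp add: D_def)
  define \<delta> where "\<delta> = \<eta> / D"
  have \<delta>: "0 < \<delta>" using \<eta> D by (simp add: \<delta>_def)
  define u where "u = (\<lambda>x t. v x t - g x + \<delta> * (th x + \<Lambda> * t))"
  have "\<Lambda> * t1 \<le> \<Lambda> * T" using t1 \<Lambda> by (intro mult_left_mono) auto
  then have "\<delta> * (th x1 + \<Lambda> * t1) \<le> \<delta> * (D / 2)"
    using \<delta> by (intro mult_left_mono) (auto simp: D_def)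
  also have "\<delta> * (D / 2) = \<eta> / 2" using D by (simp add: \<delta>_def)
  finally have uu1: "\<delta> * (th x1 + \<Lambda> * t1) \<le> \<eta> / 2" .
  have "u x1 t1 = - \<eta> + \<delta> * (th x1 + \<Lambda> * t1)" by (simp add: u_def \<eta>_def)
  then have u1: "u x1 t1 < 0" using uu1 \<eta> by linarith
  have ulow: "- Bv - K + \<delta> * (\<bar>x\<bar> - 1) \<le> u x t" if "t \<in> {0..T}" for x t
  proof -
    have "\<delta> * (\<bar>x\<bar> - 1) \<le> \<delta> * (th x + \<Lambda> * t)"
      using th_coercive[of x] \<delta> mult_nonneg_nonneg[OF \<Lambda>, of t] that by (intro mult_left_mono) auto
    moreover have "u x t = v x t - g x + \<delta> * (th x + \<Lambda> * t)" by (simp add: u_def)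
    moreover have "- Bv \<le> v x t" using Bv[OF that, of x] by linarith
    ultimately show ?thesis using gb[of x] by linarith
  qed
  define R where "R = \<bar>x1\<bar> + (Bv + K) / \<delta> + 2"
  define S where "S = {-R..R} \<times> {0..T}"
  have SET: "S \<subseteq> ET T" by (auto simp: S_def ET_def)
  have cS: "compact S" unfolding S_def by (intro compact_Times compact_Icc)
  have "0 \<le> (Bv + K) / \<delta>" using Bv[OF t1, of x1] gb[of x1] \<delta> by (intro divide_nonneg_pos) auto
  then have "\<bar>x1\<bar> \<le> R" by (simp add: R_def)
  then have x1S: "(x1, t1) \<in> S" using t1 by (auto simp: S_def abs_le_iff)
  have gcont: "continuous_on UNIV g" using g1
    by (meson DERIV_isCont continuous_at_imp_continuous_on)
  have thcont: "continuous_on UNIV th" using th_deriv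
    by (meson DERIV_isCont continuous_at_imp_continuous_on)
  have ucont: "continuous_on S (\<lambda>z. u (fst z) (snd z))"
  proof -
    have "continuous_on S (\<lambda>(x, t). v x t)" using continuous_on_subset[OF v_cont SET] .
    then have c1: "continuous_on S (\<lambda>z. v (fst z) (snd z))" by (simp add: case_prod_beta)
    have c2: "continuous_on S (\<lambda>z. g (fst z))"
      by (rule continuous_on_compose2[OF gcont continuous_on_fst]) auto
    have c3: "continuous_on S (\<lambda>z. th (fst z))"
      by (rule continuous_on_compose2[OF thcont continuous_on_fst]) auto
    show ?thesis unfolding u_def
      by (intro continuous_intros c1 c2 c3)
  qed
  obtain z0 where z0: "z0 \<in> S" and z0min: "\<And>z. z \<in> S \<Longrightarrow> u (fst z0) (snd z0) \<le> u (fst z) (snd z)"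
    using continuous_attains_inf[OF cS _ ucont] x1S by blast
  define x0 t0 where "x0 = fst z0" and "t0 = snd z0"
  have t0: "t0 \<in> {0..T}" using z0 by (auto simp: S_def t0_def)
  have umin: "u x0 t0 \<le> u x t" if "t \<in> {0..T}" for x t
  proof (cases "\<bar>x\<bar> \<le> R")
    case True
    then have "(x, t) \<in> S" using that by (auto simp: S_def)
    then show ?thesis using z0min[of "(x, t)"] by (simp add: x0_def t0_def)
  next
    case False
    have "\<delta> * ((Bv + K) / \<delta> + 1) \<le> \<delta> * (\<bar>x\<bar> - 1)"
      using False \<delta> by (intro mult_left_mono) (auto simp: R_def)
    also have "\<delta> * ((Bv + K) / \<delta> + 1) = Bv + K + \<delta>" using \<delta> by (simp add: field_simps)
    finally have "0 < u x t" using ulow[OF that, of x] \<delta> by simp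
    moreover have "u x0 t0 \<le> u x1 t1" using z0min[OF x1S] by (simp add: x0_def t0_def)
    ultimately show ?thesis using u1 by simp
  qed
  have u0neg: "u x0 t0 < 0" using umin[OF t1, of x1] u1 by simp
  have "t0 \<noteq> 0"
  proof
    assume "t0 = 0"
    then have "u x0 t0 = \<delta> * th x0" by (simp add: u_def init)
    then show False using u0neg mult_nonneg_nonneg[of \<delta> "th x0"] th_nonneg[of x0] \<delta> by linarith
  qed
  then have t0p: "t0 \<in> {0<..T}" using t0 by auto
  have wneg: "v x0 t0 - g x0 < 0"
  proof -
    have "0 \<le> \<delta> * (th x0 + \<Lambda> * t0)"
      using \<delta> th_nonneg[of x0] \<Lambda> t0 by (intro mult_nonneg_nonneg add_nonneg_nonneg) auto
    moreover have "u x0 t0 = v x0 t0 - g x0 + \<delta> * (th x0 + \<Lambda> * t0)" by (simp add: u_def)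
    ultimately show ?thesis using u0neg by linarith
  qed
  have dv: "((\<lambda>z. v z t0) has_real_derivative pdx v z t0) (at z)" for z
    using v_dx[OF t0, of z] by (simp add: pdx_def DERIV_deriv_iff_real_differentiable)
  have dvx: "((\<lambda>z. pdx v z t0) has_real_derivative pdx (pdx v) x0 t0) (at x0)"
    using v_dxx[OF t0, of x0] by (simp add: pdx_def[of "pdx v"] DERIV_deriv_iff_real_differentiable)
  have df: "((\<lambda>z. v z t0 - g z + \<delta> * (th z + \<Lambda> * t0)) has_real_derivative
      (pdx v z t0 - g' z + \<delta> * (tanh z + 0))) (at z)" for z
    by (intro DERIV_add DERIV_diff DERIV_cmult DERIV_const dv g1 th_deriv)
  have df2: "((\<lambda>z. pdx v z t0 - g' z + \<delta> * (tanh z + 0)) has_real_derivative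
      (pdx (pdx v) x0 t0 - g'' x0 + \<delta> * ((1 - tanh x0 ^ 2) + 0))) (at x0)"
    by (intro DERIV_add DERIV_diff DERIV_cmult DERIV_const dvx g2 tanh_deriv)
  have fmin: "(\<lambda>z. v z t0 - g z + \<delta> * (th z + \<Lambda> * t0)) x0 \<le> (\<lambda>z. v z t0 - g z + \<delta> * (th z + \<Lambda> * t0)) z" for z
    using umin[OF t0, of z] by (simp add: u_def)
  note md = min_deriv2[OF df df2 fmin]
  have vx: "pdx v x0 t0 = g' x0 - \<delta> * tanh x0" using md(1) by simp
  have vxx: "g'' x0 - \<delta> * (1 - tanh x0 ^ 2) \<le> pdx (pdx v) x0 t0" using md(2) by simp
  have "(\<lambda>s. v x0 s) differentiable (at t0 within {0..T})" using v_dt[OF t0] .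
  then have dt: "((\<lambda>s. v x0 s) has_real_derivative pdt T v x0 t0) (at t0 within {0..T})"
    by (simp add: pdt_def vector_derivative_works has_real_derivative_iff_has_vector_derivative)
  have dphi: "((\<lambda>s. v x0 s - g x0 + \<delta> * (th x0 + \<Lambda> * s)) has_real_derivative
      (pdt T v x0 t0 - 0 + \<delta> * (0 + \<Lambda> * 1))) (at t0 within {0..T})"
    by (intro DERIV_add DERIV_diff DERIV_cmult DERIV_const dt DERIV_ident)
  have "pdt T v x0 t0 - 0 + \<delta> * (0 + \<Lambda> * 1) \<le> 0"
    by (rule min_left_deriv[OF dphi]) (use t0p umin in \<open>auto simp: u_def\<close>)
  then have vt: "pdt T v x0 t0 \<le> - \<delta> * \<Lambda>" by simp
  define f2 where "f2 = (\<lambda>y::real. indicator {y::real. \<bar>y\<bar> \<le> 1} y * y\<^sup>2)"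
  define f1 where "f1 = (\<lambda>y::real. \<bar>y\<bar> * indicator {y::real. 1 < \<bar>y\<bar>} y)"
  define fm where "fm = (\<lambda>y::real. indicator {y::real. 1 < \<bar>y\<bar>} y :: real)"
  have i2: "integrable \<nu> f2" and i1: "integrable \<nu> f1" and im: "integrable \<nu> fm"
    using int1 int2 intm by (simp_all add: f1_def f2_def fm_def)
  define H where "H = (\<lambda>y::real. Jc * f2 y + \<delta> * f2 y + K * fm y + \<delta> * f1 y)"
  have Hint: "integrable \<nu> H" unfolding H_def
    by (intro Bochner_Integration.integrable_add integrable_mult_right i1 i2 im)
  have Hval: "(\<integral>y. H y \<partial>\<nu>) = Jc * I2 + \<delta> * I2 + K * m + \<delta> * I1"
  proof -
    have "(\<integral>y. H y \<partial>\<nu>) = (\<integral>y. Jc * f2 y + \<delta> * f2 y + K * fm y \<partial>\<nu>) + (\<integral>y. \<delta> * f1 y \<partial>\<nu>)"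
      unfolding H_def
      by (intro Bochner_Integration.integral_add Bochner_Integration.integrable_add integrable_mult_right i1 i2 im)
    also have "(\<integral>y. Jc * f2 y + \<delta> * f2 y + K * fm y \<partial>\<nu>) = (\<integral>y. Jc * f2 y + \<delta> * f2 y \<partial>\<nu>) + (\<integral>y. K * fm y \<partial>\<nu>)"
      by (intro Bochner_Integration.integral_add Bochner_Integration.integrable_add integrable_mult_right i1 i2 im)
    also have "(\<integral>y. Jc * f2 y + \<delta> * f2 y \<partial>\<nu>) = (\<integral>y. Jc * f2 y \<partial>\<nu>) + (\<integral>y. \<delta> * f2 y \<partial>\<nu>)"
      by (intro Bochner_Integration.integral_add Bochner_Integration.integrable_add integrable_mult_right i1 i2 im)
    finally show ?thesis
      using intm_eq by (simp add: I1_def I2_def m_def f1_def f2_def fm_def)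
  qed
  have H0: "0 \<le> H y" for y
    unfolding H_def f1_def f2_def fm_def using Jc \<delta> gb[of 0]
    by (intro add_nonneg_nonneg mult_nonneg_nonneg) auto
  have Hlow: "- H y \<le> v (x0 + y) t0 - v x0 t0 - y * pdx v x0 t0 * indicator {y. \<bar>y\<bar> \<le> 1} y" for y
  proof -
    define A where "A = v (x0 + y) t0 - v x0 t0"
    define G where "G = g (x0 + y) - g x0"
    define Th where "Th = th (x0 + y) - th x0"
    have uu: "u x0 t0 \<le> u (x0 + y) t0" using umin[OF t0] .
    moreover have "u (x0 + y) t0 - u x0 t0 = A - G + \<delta> * Th"
      by (simp add: u_def A_def G_def Th_def algebra_simps)
    ultimately have vd: "G - \<delta> * Th \<le> A" by linarith
    show ?thesis
    proof (cases "\<bar>y\<bar> \<le> 1")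
      case True
      have ind: "indicator {y::real. \<bar>y\<bar> \<le> 1} y = (1::real)" "indicator {y::real. 1 < \<bar>y\<bar>} y = (0::real)"
        using True by auto
      have Hy: "H y = Jc * y\<^sup>2 + \<delta> * y\<^sup>2" by (simp add: H_def f1_def f2_def fm_def ind)
      have rhs: "v (x0 + y) t0 - v x0 t0 - y * pdx v x0 t0 * indicator {y. \<bar>y\<bar> \<le> 1} y
          = A - y * g' x0 + \<delta> * (y * tanh x0)"
        by (simp add: ind vx A_def algebra_simps)
      have tg0: "- Jc * y\<^sup>2 \<le> g (x0 + y) - g x0 - y * g' x0"
        by (rule taylor_lower[OF g1 g2 g2lb Jc])
      have tg: "- (Jc * y\<^sup>2) \<le> G - y * g' x0" using tg0 by (simp add: G_def)
      have "- 1 * y\<^sup>2 \<le> (\<lambda>z. - th z) (x0 + y) - (\<lambda>z. - th z) x0 - y * (\<lambda>z. - tanh z) x0"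
      proof (rule taylor_lower[where f'' = "\<lambda>z. - (1 - tanh z ^ 2)"])
        show "((\<lambda>z. - th z) has_real_derivative - tanh z) (at z)" for z
          by (intro DERIV_minus th_deriv)
        show "((\<lambda>z. - tanh z) has_real_derivative - (1 - tanh z ^ 2)) (at z)" for z
          by (intro DERIV_minus tanh_deriv)
        show "- 1 \<le> - (1 - tanh z ^ 2)" for z :: real using zero_le_power2[of "tanh z"] by linarith
      qed simp
      then have "Th - y * tanh x0 \<le> y\<^sup>2" by (simp add: Th_def)
      then have "\<delta> * (Th - y * tanh x0) \<le> \<delta> * y\<^sup>2"
        using \<delta> by (intro mult_left_mono) auto
      then have th2: "\<delta> * Th - \<delta> * (y * tanh x0) \<le> \<delta> * y\<^sup>2" by (simp add: right_diff_distrib)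
      show ?thesis unfolding rhs Hy using vd tg th2 by linarith
    next
      case False
      have ind: "indicator {y::real. \<bar>y\<bar> \<le> 1} y = (0::real)" "indicator {y::real. 1 < \<bar>y\<bar>} y = (1::real)"
        using False by auto
      have Hy: "H y = K + \<delta> * \<bar>y\<bar>" by (simp add: H_def f1_def f2_def fm_def ind)
      have rhs: "v (x0 + y) t0 - v x0 t0 - y * pdx v x0 t0 * indicator {y. \<bar>y\<bar> \<le> 1} y = A"
        by (simp add: ind A_def)
      have "Th \<le> \<bar>y\<bar>" using th_lip[of "x0 + y" x0] by (simp add: Th_def)
      then have "\<delta> * Th \<le> \<delta> * \<bar>y\<bar>" using \<delta> by (intro mult_left_mono) auto
      moreover have "- K \<le> G" using gb[of "x0 + y"] gb[of x0] by (simp add: G_def)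
      ultimately show ?thesis unfolding rhs Hy using vd by linarith
    qed
  qed
  have Iv: "- (Jc * I2 + \<delta> * I2 + K * m + \<delta> * I1) \<le> levy_I \<nu> v x0 t0"
    unfolding levy_I_def using integral_lower[OF Hint Hlow H0] Hval by simp
  have E: "pdt T v x0 t0 - (a x0 t0 * pdx (pdx v) x0 t0 + b x0 t0 * pdx v x0 t0)
      - levy_I \<nu> v x0 t0 + r x0 t0 * v x0 t0 + p (v x0 t0 - g x0) = 0"
    using eq[OF t0p] by (simp add: LD_def)
  obtain av where av: "av = a x0 t0" "0 \<le> av" "av \<le> Ac" using ab[OF t0] by blast
  obtain bv where bv: "bv = b x0 t0" "\<bar>bv\<bar> \<le> Bc" using bb[OF t0] by blast
  obtain rv where rv: "rv = r x0 t0" "0 \<le> rv" "rv \<le> Rc" using rb[OF t0] by blast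
  define s2 where "s2 = 1 - tanh x0 ^ 2"
  have s2: "s2 \<le> 1" "0 \<le> s2"
  proof -
    show "s2 \<le> 1" by (simp add: s2_def)
    have "\<bar>tanh x0\<bar> \<le> 1"
      by (simp add: abs_le_iff) (meson less_imp_le tanh_real_gt_neg1 tanh_real_lt_1)
    then have "tanh x0 ^ 2 \<le> 1" by (simp only: abs_square_le_1)
    then show "0 \<le> s2" by (simp add: s2_def)
  qed
  have a1: "av * (g'' x0 - \<delta> * s2) \<le> av * pdx (pdx v) x0 t0"
    using vxx av(2) by (intro mult_left_mono) (auto simp: s2_def)
  have a2: "av * (- Jc) \<le> av * g'' x0" using g2lb[of x0] av(2) by (intro mult_left_mono) auto
  have a3: "av * Jc \<le> Ac * Jc" using av Jc by (intro mult_right_mono) auto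
  have a4: "av * (\<delta> * s2) \<le> Ac * \<delta>"
  proof -
    have "\<delta> * s2 \<le> \<delta>" using \<delta> s2 by (simp add: mult_left_le)
    then have "av * (\<delta> * s2) \<le> av * \<delta>" using av(2) by (intro mult_left_mono) auto
    also have "\<dots> \<le> Ac * \<delta>" using av \<delta> by (intro mult_right_mono) auto
    finally show ?thesis .
  qed
  have b1: "- (bv * g' x0) \<le> Bc * L"
  proof -
    have "\<bar>bv * g' x0\<bar> \<le> Bc * L" unfolding abs_mult
      using bv(2) gl[of x0] by (intro mult_mono) auto
    then show ?thesis by simp
  qed
  have b2: "bv * tanh x0 \<le> Bc"
  proof -
    have "\<bar>tanh x0\<bar> \<le> 1"
      by (simp add: abs_le_iff) (meson less_imp_le tanh_real_gt_neg1 tanh_real_lt_1)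
    then have "\<bar>bv * tanh x0\<bar> \<le> Bc * 1" unfolding abs_mult
      using bv(2) by (intro mult_mono) auto
    then show ?thesis by simp
  qed
  have b3: "\<delta> * (bv * tanh x0) \<le> \<delta> * Bc" using b2 \<delta> by (intro mult_left_mono) auto
  have r1: "rv * (v x0 t0 - g x0) \<le> 0" using rv(2) wneg by (simp add: mult_nonneg_nonpos)
  have r2: "rv * g x0 \<le> Rc * K" using rv gb[of x0] by (intro mult_mono) auto
  have pp: "p (v x0 t0 - g x0) \<le> p 0" using wneg p_mono by simp
  have E2: "pdt T v x0 t0 - av * pdx (pdx v) x0 t0 - bv * (g' x0 - \<delta> * tanh x0)
      - levy_I \<nu> v x0 t0 + rv * ((v x0 t0 - g x0) + g x0) + p (v x0 t0 - g x0) = 0"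
    using E av(1) bv(1) rv(1) vx by simp
  have E3: "pdt T v x0 t0 - av * pdx (pdx v) x0 t0 - bv * g' x0 + \<delta> * (bv * tanh x0)
      - levy_I \<nu> v x0 t0 + rv * (v x0 t0 - g x0) + rv * g x0 + p (v x0 t0 - g x0) = 0"
    using E2 by (simp add: algebra_simps)
  have a1': "av * g'' x0 - av * (\<delta> * s2) \<le> av * pdx (pdx v) x0 t0"
    using a1 by (simp add: algebra_simps)
  have lam: "\<delta> * \<Lambda> = Ac * \<delta> + \<delta> * Bc + \<delta> * I2 + \<delta> * I1 + \<delta>"
    by (simp add: \<Lambda>_def algebra_simps)
  have p0': "p 0 = - (Ac * Jc) - Bc * L - Rc * K - Jc * I2 - K * m"
    using p0 by (simp add: I2_def m_def)
  have a2': "- (av * Jc) \<le> av * g'' x0" using a2 by simp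
  have vt': "pdt T v x0 t0 \<le> - (\<delta> * \<Lambda>)" using vt by simp
  have b1': "- (bv * g' x0) \<le> Bc * L" using b1 .
  show False
    using E3 a1' a2' a3 a4 b1' b3 r1 r2 pp p0' vt' Iv \<delta> lam
    by linarith
qed


lemma Dtx00: "Dtx T 0 0 u = u" by (simp add: Dtx_def)
lemma Dtx01: "Dtx T 0 1 u = pdx u" by (simp add: Dtx_def)

lemma ph0:
  assumes "parabolic_holder \<gamma> T u"
  shows "continuous_on (ET T) (\<lambda>(x, t). u x t)" "bounded ((\<lambda>(x, t). u x t) ` ET T)"
  using assms unfolding parabolic_holder_def
  by (metis (no_types, lifting) Dtx00 le0 mult_0_right add_0)+

lemma ph2:
  assumes "parabolic_holder \<gamma> T u" "nat \<lfloor>\<gamma>\<rfloor> = 2" "t \<in> {0..T}"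
  shows "(\<lambda>s. u x s) differentiable (at t within {0..T})"
    "(\<lambda>z. u z t) differentiable (at x)"
    "(\<lambda>z. pdx u z t) differentiable (at x)"
proof -
  have H: "\<forall>r s. 2 * r + s \<le> nat \<lfloor>\<gamma>\<rfloor> \<longrightarrow>
        (2 * (r + 1) + s \<le> nat \<lfloor>\<gamma>\<rfloor> \<longrightarrow>
           (\<forall>x t. t \<in> {0..T} \<longrightarrow> (\<lambda>\<tau>. Dtx T r s u x \<tau>) differentiable (at t within {0..T})))
      \<and> (r = 0 \<and> s + 1 \<le> nat \<lfloor>\<gamma>\<rfloor> \<longrightarrow>
           (\<forall>x t. t \<in> {0..T} \<longrightarrow> (\<lambda>z. Dtx T 0 s u z t) differentiable (at x)))"
    using assms(1) unfolding parabolic_holder_def by blast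
  from H[rule_format, of 0 0] assms(2,3) show "(\<lambda>s. u x s) differentiable (at t within {0..T})"
    by (simp add: Dtx00)
  from H[rule_format, of 0 0] assms(2,3) show "(\<lambda>z. u z t) differentiable (at x)"
    by (simp add: Dtx00)
  from H[rule_format, of 0 1] assms(2,3) show "(\<lambda>z. pdx u z t) differentiable (at x)"
    by (simp add: Dtx_def)
qed

lemma sup_bounds:
  assumes "bounded ((\<lambda>(x, t). f x t) ` ET T)" "t \<in> {0..T}"
  shows "f x t \<le> supET T f" "\<bar>f x t\<bar> \<le> supET T (\<lambda>x t. \<bar>f x t\<bar>)"
proof -
  obtain c where c: "\<forall>z\<in>(\<lambda>(x, t). f x t) ` ET T. norm z \<le> c"
    using assms(1) unfolding bounded_iff by blast
  have cb: "\<bar>f (fst z) (snd z)\<bar> \<le> c" if "z \<in> ET T" for z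
    using c that by (cases z) force
  have mem: "(x, t) \<in> ET T" using assms(2) by (simp add: ET_def)
  have "bdd_above ((\<lambda>z. f (fst z) (snd z)) ` ET T)"
    by (rule bdd_aboveI2[where M = c]) (use cb in force)
  from cSUP_upper[OF mem this] show "f x t \<le> supET T f" by (simp add: supET_def)
  have "bdd_above ((\<lambda>z. \<bar>f (fst z) (snd z)\<bar>) ` ET T)"
    by (rule bdd_aboveI2[where M = c]) (use cb in force)
  from cSUP_upper[OF mem this] show "\<bar>f x t\<bar> \<le> supET T (\<lambda>x t. \<bar>f x t\<bar>)" by (simp add: supET_def)
qed

lemma smooth_d1: "smooth_fun f \<Longrightarrow> (f has_real_derivative deriv f z) (at z)"
  unfolding smooth_fun_def
  by (metis DERIV_deriv_iff_real_differentiable funpow_0)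

lemma smooth_d2: "smooth_fun f \<Longrightarrow> (deriv f has_real_derivative deriv (deriv f) z) (at z)"
  unfolding smooth_fun_def
  by (metis DERIV_deriv_iff_real_differentiable funpow_0 funpow_Suc_right o_apply One_nat_def)

lemma smooth_mono:
  assumes "smooth_fun f" "\<And>y. 0 \<le> deriv f y" "a \<le> b"
  shows "f a \<le> f b"
  using DERIV_nonneg_imp_nondecreasing[OF assms(3)] smooth_d1[OF assms(1)] assms(2) by blast



theorem corollary4p8:
  fixes T ell lam M \<alpha> \<beta> K L J0 :: real
    and a b r g :: "real \<Rightarrow> real \<Rightarrow> real"
    and g0 :: "real \<Rightarrow> real"
    and \<nu> :: "real measure" and \<rho> :: "real \<Rightarrow> real"
    and \<phi> :: "real \<Rightarrow> real"
    and p :: "real \<Rightarrow> real \<Rightarrow> real"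
    and v :: "real \<Rightarrow> real \<Rightarrow> real \<Rightarrow> real"
  assumes T: "0 < T"
    and l: "1 < ell"
    and a_H: "parabolic_holder ell T a" and b_H: "parabolic_holder ell T b" and r_H: "parabolic_holder ell T r"
    and r_nonneg: "\<And>x t. t \<in> {0..T} \<Longrightarrow> 0 \<le> r x t"
    and lam: "0 < lam" and a_ell: "\<And>x t. t \<in> {0..T} \<Longrightarrow> lam \<le> a x t"
    and levy: "levy_measure \<nu>"
    and nu_density: "\<nu> = density lborel (\<lambda>y. ennreal (\<rho> y))"
    and rho_meas: "\<rho> \<in> borel_measurable borel" and rho_nonneg: "\<And>y. 0 \<le> \<rho> y"
    and nu_first_moment: "(\<integral>\<^sup>+ y. ennreal (\<bar>y\<bar> * indicator {y. 1 < \<bar>y\<bar>} y) \<partial>\<nu>) < \<infinity>"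
    and M: "0 < M" and alpha: "1 \<le> \<alpha>" "\<alpha> < 2"
    and rho_bound: "\<And>y. y \<noteq> 0 \<Longrightarrow> \<bar>y\<bar> \<le> 1 \<Longrightarrow> \<rho> y \<le> M / \<bar>y\<bar> powr (1 + \<alpha>)"
    and beta: "\<alpha> < \<beta>" "\<beta> < 2"
    and g0_bounds: "\<And>x. 0 \<le> g0 x \<and> g0 x \<le> K"
    and g0_lip: "lipschitz_on L UNIV g0"
    and g0_d2: "dist_d2_ge g0 (- J0)"
    and mollifier: "smooth_fun \<phi>" "\<And>y. 0 \<le> \<phi> y" "\<And>y. 1 \<le> \<bar>y\<bar> \<Longrightarrow> \<phi> y = 0"
        "(\<integral>y. \<phi> y \<partial>lborel) = 1"
    and g_moll: "\<And>\<epsilon> x. \<epsilon> \<in> {0<..<1} \<Longrightarrow>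
        g \<epsilon> x = (\<integral>y. g0 (x - y) * (\<phi> (y / \<epsilon>) / \<epsilon>) \<partial>lborel)"
    and g_smooth: "\<And>\<epsilon>. \<epsilon> \<in> {0<..<1} \<Longrightarrow> smooth_fun (g \<epsilon>)"
    and g_d2: "\<And>\<epsilon> x. \<epsilon> \<in> {0<..<1} \<Longrightarrow> - J0 \<le> deriv (deriv (g \<epsilon>)) x"
    and g_bounds: "\<And>\<epsilon> x. \<epsilon> \<in> {0<..<1} \<Longrightarrow> 0 \<le> g \<epsilon> x \<and> g \<epsilon> x \<le> K"
    and g_lip: "\<And>\<epsilon> x. \<epsilon> \<in> {0<..<1} \<Longrightarrow> \<bar>deriv (g \<epsilon>) x\<bar> \<le> L"
    and p_smooth: "\<And>\<epsilon>. \<epsilon> \<in> {0<..<1} \<Longrightarrow> smooth_fun (p \<epsilon>)"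
    and p_nonpos: "\<And>\<epsilon> y. \<epsilon> \<in> {0<..<1} \<Longrightarrow> p \<epsilon> y \<le> 0"
    and p_zero: "\<And>\<epsilon> y. \<epsilon> \<in> {0<..<1} \<Longrightarrow> \<epsilon> \<le> y \<Longrightarrow> p \<epsilon> y = 0"
    and p_at0: "\<And>\<epsilon>. \<epsilon> \<in> {0<..<1} \<Longrightarrow> p \<epsilon> 0 =
        - supET T a * J0 - supET T (\<lambda>x t. \<bar>b x t\<bar>) * L - supET T r * K
        - J0 * (\<integral>y. indicator {y. \<bar>y\<bar> \<le> 1} y * y\<^sup>2 \<partial>\<nu>)
        - K * measure \<nu> {y. 1 < \<bar>y\<bar>}"
    and p_mono: "\<And>\<epsilon> y. \<epsilon> \<in> {0<..<1} \<Longrightarrow> 0 \<le> deriv (p \<epsilon>) y"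
    and p_concave: "\<And>\<epsilon> y. \<epsilon> \<in> {0<..<1} \<Longrightarrow> deriv (deriv (p \<epsilon>)) y \<le> 0"
    and p_lim_pos: "\<And>y. 0 < y \<Longrightarrow> ((\<lambda>\<epsilon>. p \<epsilon> y) \<longlongrightarrow> 0) (at_right 0)"
    and p_lim_neg: "\<And>y. y < 0 \<Longrightarrow> filterlim (\<lambda>\<epsilon>. p \<epsilon> y) at_bot (at_right 0)"
    and v_H: "\<And>\<epsilon>. \<epsilon> \<in> {0<..<1} \<Longrightarrow> parabolic_holder (2 + (\<beta> - \<alpha>) / 2) T (v \<epsilon>)"
    and v_bdd: "\<And>\<epsilon>. \<epsilon> \<in> {0<..<1} \<Longrightarrow> bounded ((\<lambda>(x, t). v \<epsilon> x t) ` ET T)"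
    and v_eq: "\<And>\<epsilon> x t. \<epsilon> \<in> {0<..<1} \<Longrightarrow> t \<in> {0<..T} \<Longrightarrow>
        pdt T (v \<epsilon>) x t - LD a b (v \<epsilon>) x t - levy_I \<nu> (v \<epsilon>) x t + r x t * v \<epsilon> x t
          + p \<epsilon> (v \<epsilon> x t - g \<epsilon> x) = 0"
    and v_init: "\<And>\<epsilon> x. \<epsilon> \<in> {0<..<1} \<Longrightarrow> v \<epsilon> x 0 = g \<epsilon> x"
  shows "\<exists>C. \<forall>\<epsilon>\<in>{0<..<1}. \<forall>x. \<forall>t\<in>{0..T}. \<bar>p \<epsilon> (v \<epsilon> x t - g \<epsilon> x)\<bar> \<le> C"
  proof -
  define C where "C = supET T a * J0 + supET T (\<lambda>x t. \<bar>b x t\<bar>) * L + supET T r * K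
        + J0 * (\<integral>y. indicator {y. \<bar>y\<bar> \<le> 1} y * y\<^sup>2 \<partial>\<nu>)
        + K * measure \<nu> {y. 1 < \<bar>y\<bar>}"
  have sets_nu: "sets \<nu> = sets borel" and nn2: "(\<integral>\<^sup>+ y. ennreal (min 1 (y\<^sup>2)) \<partial>\<nu>) < \<infinity>"
    using levy by (auto simp: levy_measure_def)
  have space_nu: "space \<nu> = UNIV" using sets_eq_imp_space_eq[OF sets_nu] by simp
  have meas: "borel_measurable \<nu> = borel_measurable borel"
    by (rule measurable_cong_sets) (auto simp: sets_nu)
  have int2: "integrable \<nu> (\<lambda>y. indicator {y::real. \<bar>y\<bar> \<le> 1} y * y\<^sup>2)"
  proof (rule integrableI_bounded)
    show "(\<lambda>y. indicator {y::real. \<bar>y\<bar> \<le> 1} y * y\<^sup>2) \<in> borel_measurable \<nu>"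
      unfolding meas by measurable
    have "(\<integral>\<^sup>+ y. ennreal (norm (indicator {y::real. \<bar>y\<bar> \<le> 1} y * y\<^sup>2)) \<partial>\<nu>)
        \<le> (\<integral>\<^sup>+ y. ennreal (min 1 (y\<^sup>2)) \<partial>\<nu>)"
      by (intro nn_integral_mono) (auto simp: indicator_def abs_square_le_1)
    then show "(\<integral>\<^sup>+ y. ennreal (norm (indicator {y::real. \<bar>y\<bar> \<le> 1} y * y\<^sup>2)) \<partial>\<nu>) < \<infinity>"
      using nn2 by (simp add: order_le_less_trans)
  qed
  have int1: "integrable \<nu> (\<lambda>y. \<bar>y\<bar> * indicator {y::real. 1 < \<bar>y\<bar>} y)"
  proof (rule integrableI_bounded)
    show "(\<lambda>y. \<bar>y\<bar> * indicator {y::real. 1 < \<bar>y\<bar>} y) \<in> borel_measurable \<nu>"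
      unfolding meas by measurable
    have "(\<integral>\<^sup>+ y. ennreal (norm (\<bar>y\<bar> * indicator {y::real. 1 < \<bar>y\<bar>} y)) \<partial>\<nu>)
        = (\<integral>\<^sup>+ y. ennreal (\<bar>y\<bar> * indicator {y. 1 < \<bar>y\<bar>} y) \<partial>\<nu>)"
      by (intro nn_integral_cong) (auto simp: indicator_def)
    then show "(\<integral>\<^sup>+ y. ennreal (norm (\<bar>y\<bar> * indicator {y::real. 1 < \<bar>y\<bar>} y)) \<partial>\<nu>) < \<infinity>"
      using nu_first_moment by simp
  qed
  have intm: "integrable \<nu> (\<lambda>y. indicator {y::real. 1 < \<bar>y\<bar>} y :: real)"
  proof (rule integrableI_bounded)
    show "(\<lambda>y. indicator {y::real. 1 < \<bar>y\<bar>} y :: real) \<in> borel_measurable \<nu>"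
      unfolding meas by measurable
    have "(\<integral>\<^sup>+ y. ennreal (norm (indicator {y::real. 1 < \<bar>y\<bar>} y :: real)) \<partial>\<nu>)
        \<le> (\<integral>\<^sup>+ y. ennreal (\<bar>y\<bar> * indicator {y. 1 < \<bar>y\<bar>} y) \<partial>\<nu>)"
      by (intro nn_integral_mono) (auto simp: indicator_def)
    then show "(\<integral>\<^sup>+ y. ennreal (norm (indicator {y::real. 1 < \<bar>y\<bar>} y :: real)) \<partial>\<nu>) < \<infinity>"
      using nu_first_moment by (simp add: order_le_less_trans)
  qed
  have intm_eq: "(\<integral>y. indicator {y::real. 1 < \<bar>y\<bar>} y \<partial>\<nu>) = measure \<nu> {y. 1 < \<bar>y\<bar>}"
    by (simp add: space_nu)
  have half: "(1/2::real) \<in> {0<..<1}" by simp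
  have J0: "0 \<le> J0"
    by (rule J_nonneg[OF smooth_d1[OF g_smooth[OF half]] smooth_d2[OF g_smooth[OF half]]
          g_d2[OF half] g_bounds[OF half]])
  have fl: "nat \<lfloor>2 + (\<beta> - \<alpha>) / 2\<rfloor> = 2"
  proof -
    have "\<lfloor>2 + (\<beta> - \<alpha>) / 2\<rfloor> = 2" using alpha beta by (simp add: floor_eq_iff)
    then show ?thesis by simp
  qed
  have bd_a: "bounded ((\<lambda>(x, t). a x t) ` ET T)" using ph0(2)[OF a_H] .
  have bd_b: "bounded ((\<lambda>(x, t). b x t) ` ET T)" using ph0(2)[OF b_H] .
  have bd_r: "bounded ((\<lambda>(x, t). r x t) ` ET T)" using ph0(2)[OF r_H] .
  show ?thesis
  proof (rule exI[where x = C], intro ballI allI)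
    fix \<epsilon> x t :: real assume e: "\<epsilon> \<in> {0<..<1}" and t: "t \<in> {0..T}"
    have ge: "g \<epsilon> x \<le> v \<epsilon> x t"
    proof (rule main_nonneg[where T = T and v = "v \<epsilon>" and g = "g \<epsilon>" and x = x and t = t and a = a and b = b and r = r and \<nu> = \<nu> and p = "p \<epsilon>"
          and g' = "deriv (g \<epsilon>)" and g'' = "deriv (deriv (g \<epsilon>))" and Jc = J0 and K = K and L = L
          and Ac = "supET T a" and Bc = "supET T (\<lambda>x t. \<bar>b x t\<bar>)" and Rc = "supET T r"])
      show "0 < T" by (rule T)
      show "continuous_on (ET T) (\<lambda>(x, t). v \<epsilon> x t)" using ph0(1)[OF v_H[OF e]] .
      show "bounded ((\<lambda>(x, t). v \<epsilon> x t) ` ET T)" using v_bdd[OF e] .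
      show "\<And>x t. t \<in> {0..T} \<Longrightarrow> (\<lambda>z. v \<epsilon> z t) differentiable (at x)"
        using ph2(2)[OF v_H[OF e] fl] by blast
      show "\<And>x t. t \<in> {0..T} \<Longrightarrow> (\<lambda>z. pdx (v \<epsilon>) z t) differentiable (at x)"
        using ph2(3)[OF v_H[OF e] fl] by blast
      show "\<And>x t. t \<in> {0..T} \<Longrightarrow> (\<lambda>s. v \<epsilon> x s) differentiable (at t within {0..T})"
        using ph2(1)[OF v_H[OF e] fl] by blast
      show "\<And>z. (g \<epsilon> has_real_derivative deriv (g \<epsilon>) z) (at z)" using smooth_d1[OF g_smooth[OF e]] .
      show "\<And>z. (deriv (g \<epsilon>) has_real_derivative deriv (deriv (g \<epsilon>)) z) (at z)"
        using smooth_d2[OF g_smooth[OF e]] .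
      show "\<And>z. - J0 \<le> deriv (deriv (g \<epsilon>)) z" using g_d2[OF e] .
      show "0 \<le> J0" by (rule J0)
      show "\<And>z. 0 \<le> g \<epsilon> z \<and> g \<epsilon> z \<le> K" using g_bounds[OF e] .
      show "\<And>z. \<bar>deriv (g \<epsilon>) z\<bar> \<le> L" using g_lip[OF e] .
      show "\<And>x t. t \<in> {0..T} \<Longrightarrow> 0 \<le> a x t \<and> a x t \<le> supET T a"
        using a_ell lam sup_bounds(1)[OF bd_a] by (meson less_le_trans less_imp_le)
      show "\<And>x t. t \<in> {0..T} \<Longrightarrow> \<bar>b x t\<bar> \<le> supET T (\<lambda>x t. \<bar>b x t\<bar>)"
        using sup_bounds(2)[OF bd_b] by blast
      show "\<And>x t. t \<in> {0..T} \<Longrightarrow> 0 \<le> r x t \<and> r x t \<le> supET T r"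
        using r_nonneg sup_bounds(1)[OF bd_r] by blast
      show "integrable \<nu> (\<lambda>y. indicator {y. \<bar>y\<bar> \<le> 1} y * y\<^sup>2)" using int2 .
      show "integrable \<nu> (\<lambda>y. \<bar>y\<bar> * indicator {y. 1 < \<bar>y\<bar>} y)" using int1 .
      show "integrable \<nu> (\<lambda>y. indicator {y::real. 1 < \<bar>y\<bar>} y :: real)" using intm .
      show "(\<integral>y. indicator {y::real. 1 < \<bar>y\<bar>} y \<partial>\<nu>) = measure \<nu> {y. 1 < \<bar>y\<bar>}" using intm_eq .
      show "\<And>y. y \<le> 0 \<Longrightarrow> p \<epsilon> y \<le> p \<epsilon> 0"
        using smooth_mono[OF p_smooth[OF e] p_mono[OF e]] by blast
      show "p \<epsilon> 0 = - supET T a * J0 - supET T (\<lambda>x t. \<bar>b x t\<bar>) * L - supET T r * K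
        - J0 * (\<integral>y. indicator {y. \<bar>y\<bar> \<le> 1} y * y\<^sup>2 \<partial>\<nu>) - K * measure \<nu> {y. 1 < \<bar>y\<bar>}"
        using p_at0[OF e] .
      show "\<And>x t. t \<in> {0<..T} \<Longrightarrow> pdt T (v \<epsilon>) x t - LD a b (v \<epsilon>) x t - levy_I \<nu> (v \<epsilon>) x t
          + r x t * v \<epsilon> x t + p \<epsilon> (v \<epsilon> x t - g \<epsilon> x) = 0"
        using v_eq[OF e] .
      show "\<And>x. v \<epsilon> x 0 = g \<epsilon> x" using v_init[OF e] .
      show "t \<in> {0..T}" by (rule t)
    qed
    have "p \<epsilon> 0 \<le> p \<epsilon> (v \<epsilon> x t - g \<epsilon> x)"
      using smooth_mono[OF p_smooth[OF e] p_mono[OF e]] ge by simp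
    moreover have "p \<epsilon> (v \<epsilon> x t - g \<epsilon> x) \<le> 0" using p_nonpos[OF e] .
    moreover have "p \<epsilon> 0 = - C" using p_at0[OF e] by (simp add: C_def)
    ultimately show "\<bar>p \<epsilon> (v \<epsilon> x t - g \<epsilon> x)\<bar> \<le> C" by simp
  qed
qed

end
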